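(* For all $n \ge 0$, $$d_0(W_n1,\,1W_n) \;=\; \frac12 + \frac{1}{2\cdot 3^n} \;=\; d_0(1W_n,\,W_n1).$$
   Context: Words are finite strings over $\{0,1\}$; for a word $\alpha$, $\alpha(i)$ denotes its $i$-th letter and $|\alpha|$ its length. Define $W_0 = 0$ and $W_{m+1} = W_m W_m 1 W_m$ for $m\ge 0$. For words $\alpha,\beta$ with $|\alpha|=|\beta|$ and $\alpha$ containing at least one $0$, the modified $0$-Hamming distance is $$d_0(\alpha,\beta) = \frac{|\{i : \alpha(i)=0 \text{ and } \beta(i)=1\}|}{|\{i : \alpha(i)=0\}|}.$$ Here $W_n1$ and $1W_n$ denote concatenations with the one-letter word $1$. *)

theory Defs
  imports Complex_Main
begin

text \<open>Words over {0,1} are lists of naturals (letters 0 and 1).\<close>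
type_synonym word = "nat list"

fun W :: "nat \<Rightarrow> word" where
  "W 0 = [0]"
| "W (Suc m) = W m @ W m @ [1] @ W m"

text \<open>Modified 0-Hamming distance (meaningful when |alpha| = |beta| and alpha contains a 0).\<close>
definition d0 :: "word \<Rightarrow> word \<Rightarrow> real" where
  "d0 \<alpha> \<beta> = real (card {i. i < length \<alpha> \<and> \<alpha> ! i = 0 \<and> \<beta> ! i = 1})
                 / real (card {i. i < length \<alpha> \<and> \<alpha> ! i = 0})"

end

theory Submission
  imports Defs
begin

fun g :: "nat \<Rightarrow> nat list \<Rightarrow> nat" where
  "g a [] = 0"
| "g a (x#xs) = (if a = 1 \<and> x = 0 then 1 else 0) + g x xs"

fun t :: "nat \<Rightarrow> nat list \<Rightarrow> nat" where
  "t a [] = 0"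
| "t a (x#xs) = (if a = 0 \<and> x = 1 then 1 else 0) + t x xs"

lemma g_app: "g a (xs @ ys) = g a xs + g (last (a#xs)) ys"
  by (induction xs arbitrary: a) auto

lemma t_app: "t a (xs @ ys) = t a xs + t (last (a#xs)) ys"
  by (induction xs arbitrary: a) auto

lemma g_filter: "length (filter (\<lambda>(x,p). x = 0 \<and> p = 1) (zip (xs@[1]) (a#xs))) = g a xs"
  by (induction xs arbitrary: a) auto

lemma t_filter: "length (filter (\<lambda>(p,x). p = 0 \<and> x = 1) (zip (a#xs) (xs@[1])))
   = t a xs + (if last (a#xs) = 0 then 1 else 0)"
  by (induction xs arbitrary: a) auto

lemma W_ne: "W n \<noteq> []"
  by (induction n) auto

lemma W_hd: "\<exists>ys. W n = 0 # ys"
  by (induction n) auto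

lemma W_last: "last (W n) = 0"
  by (induction n) (auto simp: W_ne)

lemma last_aW: "last (a # W n) = 0"
  using W_ne W_last by simp

lemma g0W: "g 1 (W n) = g 0 (W n) + 1"
  using W_hd[of n] by auto

lemma t0W: "t a (W n) = t 0 (W n)"
  using W_hd[of n] by auto

lemma G: "2 * g 1 (W n) = 3 ^ n + 1"
proof (induction n)
  case 0 then show ?case by simp
next
  case (Suc n)
  have "g 1 (W (Suc n)) = 3 * g 1 (W n) - 1"
    using g0W[of n] by (simp add: g_app last_aW W_last W_ne)
  moreover have "g 1 (W n) \<ge> 1" using g0W[of n] by simp
  ultimately show ?case using Suc by simp
qed

lemma T: "2 * t 1 (W n) + 1 = 3 ^ n"
proof (induction n)
  case 0 then show ?case by simp
next
  case (Suc n)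
  have "t 1 (W (Suc n)) = 3 * t 1 (W n) + 1"
    using t0W[of 1 n] t0W[of 0 n] by (simp add: t_app last_aW W_last W_ne)
  then show ?case using Suc by simp
qed

lemma Z: "length (filter (\<lambda>x. x = 0) (W n)) = 3 ^ n"
  by (induction n) auto

lemma card_zip:
  assumes "length A = length B"
  shows "card {i. i < length A \<and> A ! i = u \<and> B ! i = v}
       = length (filter (\<lambda>(x,y). x = u \<and> y = v) (zip A B))"
proof -
  have "{i. i < length A \<and> A ! i = u \<and> B ! i = v}
      = {i. i < length (zip A B) \<and> (\<lambda>(x,y). x = u \<and> y = v) (zip A B ! i)}"
    using assms by auto
  then show ?thesis by (simp add: length_filter_conv_card)
qed

lemma card_one: "card {i. i < length A \<and> A ! i = u} = length (filter (\<lambda>x. x = u) A)"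
  by (simp add: length_filter_conv_card)

theorem lemma1:
  fixes n :: nat
  shows "d0 (W n @ [1]) ([1] @ W n) = 1/2 + 1 / (2 * 3 ^ n)
       \<and> d0 ([1] @ W n) (W n @ [1]) = 1/2 + 1 / (2 * 3 ^ n)"
proof -
  have n1: "card {i. i < length (W n @ [1]) \<and> (W n @ [1]) ! i = 0 \<and> ([1] @ W n) ! i = 1}
     = g 1 (W n)"
    using card_zip[of "W n @ [1]" "[1] @ W n" 0 1] g_filter[of "W n" 1] by simp
  have n2: "card {i. i < length ([1] @ W n) \<and> ([1] @ W n) ! i = 0 \<and> (W n @ [1]) ! i = 1}
     = t 1 (W n) + 1"
    using card_zip[of "[1] @ W n" "W n @ [1]" 0 1] t_filter[of 1 "W n"] last_aW[of 1 n] by simp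
  have d1: "card {i. i < length (W n @ [1]) \<and> (W n @ [1]) ! i = 0} = 3 ^ n"
    using card_one[of "W n @ [1]" 0] Z[of n] by simp
  have d2: "card {i. i < length ([1] @ W n) \<and> ([1] @ W n) ! i = 0} = 3 ^ n"
    using card_one[of "[1] @ W n" 0] Z[of n] by simp
  have e1: "2 * real (g 1 (W n)) = 3 ^ n + 1" using G[of n]
    by (metis of_nat_1 of_nat_add of_nat_mult of_nat_numeral of_nat_power)
  have e2: "2 * real (t 1 (W n) + 1) = 3 ^ n + 1" using T[of n]
    by (metis (mono_tags, lifting) add.commute add.left_commute mult_2 of_nat_1 of_nat_add of_nat_numeral of_nat_power)
  have key: "\<And>x::real. 2 * x = 3 ^ n + 1 \<Longrightarrow> x / 3 ^ n = 1/2 + 1 / (2 * 3 ^ n)"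
    by (simp add: field_simps)
  show ?thesis
    unfolding d0_def using n1 n2 d1 d2 key[OF e1] key[OF e2] by simp
qed

end
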